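(* Consider the networked $SIRS$-$V_o$ system described in the context, and assume the disease transmission matrix $B$ is irreducible (strongly connected graph) and symmetric, $B=B^\top$. Then $$v_c=1-\frac{1}{\rho(\widetilde G^{-1})\rho(B)}$$ is well defined and is a target vaccination criterion: for every trajectory of the system and every $T\ge 0$ such that $v_i(t)>v_c$ for all $i\in[n]$ and all $t\ge T$, the infection subsystem $\dot x=\widetilde S(t)Bx-\widetilde Gx$ (with $\widetilde S(t)=\mathrm{diag}(s(t))$) is locally asymptotically stable around $x=0_n$ for all $t\ge T$.
   Context: $\rho(M)$ is the spectral radius. There are $n$ nodes. All parameters are real and nonnegative: $a_{ij},\beta_{ij},\omega_i,\delta_i,\eta^{\min}_{ij},\Delta\eta_{ij}$, and $\gamma_i>0$. Let $A=[a_{ij}]$, $B=[\beta_{ij}]$, $H_{\min}=[\eta^{\min}_{ij}]$, $\Delta H=[\Delta\eta_{ij}]$; for a square matrix $M$, $k_i[M]=\sum_jM_{ij}$, $\widetilde K[M]=\mathrm{diag}(k_i[M])$, $L[M]=\widetilde K[M]-M$; $\widetilde G=\mathrm{diag}(\gamma_i)$, $\widetilde W=\mathrm{diag}(\omega_i)$, $\widetilde D=\mathrm{diag}(\delta_i)$, $H(o)=\mathrm{diag}(o)\Delta H+H_{\min}$. State $(o,s,x,r,v)$ with $\widetilde S=\mathrm{diag}(s)$, $\widetilde R=\mathrm{diag}(r)$, dynamics (with a media input $m(t)\in[0,\infty)^n$, $\widetilde M=\mathrm{diag}(m)$, possibly $m\equiv0$) $\dot o=A(x-o)-2L[A]o+\widetilde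 M(1_n-o)$, $\dot s=\widetilde Dv-\widetilde S(Bx+H(o)v)+\widetilde Wr$, $\dot x=\widetilde SBx-\widetilde Gx$, $\dot r=\widetilde Gx-\widetilde Wr-\widetilde RH(o)v$, $\dot v=(\widetilde S+\widetilde R)H(o)v-\widetilde Dv$, with initial conditions satisfying $o_i,s_i,x_i,r_i,v_i\in[0,1]$, $s_i+x_i+r_i+v_i=1$ (preserved in time). The opinion, disease transmission and strategy-imitation graphs (adjacency matrices $A$, $B$, $H_{\min}$) are strongly connected. *)

theory Defs
  imports "HOL-Analysis.Analysis"
begin

definition diagm :: "real^'n \<Rightarrow> real^'n^'n" where
  "diagm d = (\<chi> i j. if i = j then d $ i else 0)"

definition kdeg :: "real^'n^'n \<Rightarrow> real^'n" where
  "kdeg M = (\<chi> i. \<Sum>j\<in>UNIV. M $ i $ j)"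

definition lapl :: "real^'n^'n \<Rightarrow> real^'n^'n" where
  "lapl M = diagm (kdeg M) - M"

definition Hmat :: "real^'n^'n \<Rightarrow> real^'n^'n \<Rightarrow> real^'n \<Rightarrow> real^'n^'n" where
  "Hmat Hmin dH o' = diagm o' ** dH + Hmin"

text \<open>Irreducibility / strong connectivity of the weighted digraph with adjacency matrix M:
  every node reaches every node by a nonempty path of edges with nonzero weight
  (Horn and Johnson convention; a 1x1 zero matrix is reducible).\<close>
definition irreducible_mat :: "real^'n^'n \<Rightarrow> bool" where
  "irreducible_mat M \<longleftrightarrow> (\<forall>i j. (i, j) \<in> {(a, b). M $ a $ b \<noteq> 0}\<^sup>+)"

definition nonneg_mat :: "real^'n^'n \<Rightarrow> bool" where
  "nonneg_mat M \<longleftrightarrow> (\<forall>i j. 0 \<le> M $ i $ j)"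

definition cmat :: "real^'n^'n \<Rightarrow> complex^'n^'n" where
  "cmat M = (\<chi> i j. complex_of_real (M $ i $ j))"

definition eigenvalues :: "real^'n^'n \<Rightarrow> complex set" where
  "eigenvalues M = {c. \<exists>u::complex^'n. u \<noteq> 0 \<and> cmat M *v u = c *s u}"

definition spec_rad :: "real^'n^'n \<Rightarrow> real" where
  "spec_rad M = Max (cmod ` eigenvalues M)"

definition is_solution :: "('a::real_normed_vector \<Rightarrow> 'a) \<Rightarrow> (real \<Rightarrow> 'a) \<Rightarrow> bool" where
  "is_solution f \<phi> \<longleftrightarrow> (\<forall>t\<ge>0. (\<phi> has_vector_derivative f (\<phi> t)) (at t within {0..}))"

definition loc_asym_stable :: "('a::real_normed_vector \<Rightarrow> 'a) \<Rightarrow> 'a \<Rightarrow> bool" where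
  "loc_asym_stable f x0 \<longleftrightarrow>
     (\<forall>\<epsilon>>0. \<exists>\<delta>>0. \<forall>\<phi>. is_solution f \<phi> \<and> dist (\<phi> 0) x0 < \<delta> \<longrightarrow> (\<forall>t\<ge>0. dist (\<phi> t) x0 < \<epsilon>))
   \<and> (\<exists>\<delta>>0. \<forall>\<phi>. is_solution f \<phi> \<and> dist (\<phi> 0) x0 < \<delta> \<longrightarrow> (\<phi> \<longlongrightarrow> x0) at_top)"

definition sirsvo_traj ::
  "real^'n^'n \<Rightarrow> real^'n^'n \<Rightarrow> real^'n^'n \<Rightarrow> real^'n^'n \<Rightarrow> real^'n \<Rightarrow> real^'n \<Rightarrow> real^'n \<Rightarrow>
   (real \<Rightarrow> real^'n) \<Rightarrow> (real \<Rightarrow> real^'n) \<Rightarrow> (real \<Rightarrow> real^'n) \<Rightarrow> (real \<Rightarrow> real^'n) \<Rightarrow>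
   (real \<Rightarrow> real^'n) \<Rightarrow> (real \<Rightarrow> real^'n) \<Rightarrow> bool" where
  "sirsvo_traj A B Hmin dH \<omega> \<delta> \<gamma> m op s x r v \<longleftrightarrow>
     (\<forall>t\<ge>0. \<forall>i. 0 \<le> m t $ i)
   \<and> (\<forall>t\<ge>0. \<forall>i. 0 \<le> op t $ i \<and> op t $ i \<le> 1 \<and> 0 \<le> s t $ i \<and> s t $ i \<le> 1
        \<and> 0 \<le> x t $ i \<and> x t $ i \<le> 1 \<and> 0 \<le> r t $ i \<and> r t $ i \<le> 1
        \<and> 0 \<le> v t $ i \<and> v t $ i \<le> 1 \<and> s t $ i + x t $ i + r t $ i + v t $ i = 1)
   \<and> (\<forall>t\<ge>0.
        (op has_vector_derivative
           (A *v (x t - op t) - (2::real) *\<^sub>R (lapl A *v op t) + diagm (m t) *v (vec 1 - op t)))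
           (at t within {0..})
      \<and> (s has_vector_derivative
           (diagm \<delta> *v v t - diagm (s t) *v (B *v x t + Hmat Hmin dH (op t) *v v t) + diagm \<omega> *v r t))
           (at t within {0..})
      \<and> (x has_vector_derivative (diagm (s t) ** B *v x t - diagm \<gamma> *v x t))
           (at t within {0..})
      \<and> (r has_vector_derivative
           (diagm \<gamma> *v x t - diagm \<omega> *v r t - diagm (r t) *v (Hmat Hmin dH (op t) *v v t)))
           (at t within {0..})
      \<and> (v has_vector_derivative
           ((diagm (s t) + diagm (r t)) *v (Hmat Hmin dH (op t) *v v t) - diagm \<delta> *v v t))
           (at t within {0..}))"

end

theory Submission
  imports Defs "HOL-Computational_Algebra.Polynomial"
begin


definition pf :: "(complex \<Rightarrow> complex) \<Rightarrow> bool" where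
  "pf f \<longleftrightarrow> (\<exists>p. \<forall>c. f c = poly p c)"

lemma pf_const: "pf (\<lambda>c. a)"
  unfolding pf_def by (rule exI[of _ "[:a:]"]) simp

lemma pf_id: "pf (\<lambda>c. c)"
  unfolding pf_def by (rule exI[of _ "[:0,1:]"]) simp

lemma pf_add: "pf f \<Longrightarrow> pf g \<Longrightarrow> pf (\<lambda>c. f c + g c)"
  unfolding pf_def by (metis poly_add)

lemma pf_mult: "pf f \<Longrightarrow> pf g \<Longrightarrow> pf (\<lambda>c. f c * g c)"
  unfolding pf_def by (metis poly_mult)

lemma pf_sum: "finite S \<Longrightarrow> (\<And>x. x \<in> S \<Longrightarrow> pf (f x)) \<Longrightarrow> pf (\<lambda>c. \<Sum>x\<in>S. f x c)"
  by (induction S rule: finite_induct) (auto intro: pf_add pf_const)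

lemma pf_prod: "finite S \<Longrightarrow> (\<And>x. x \<in> S \<Longrightarrow> pf (f x)) \<Longrightarrow> pf (\<lambda>c. \<Prod>x\<in>S. f x c)"
  by (induction S rule: finite_induct) (auto intro: pf_mult pf_const)

definition shiftm :: "real^'n^'n \<Rightarrow> complex \<Rightarrow> complex^'n^'n" where
  "shiftm M c = (\<chi> i j. cmat M $ i $ j - (if i = j then c else 0))"

lemma pf_det: "pf (\<lambda>c. det (shiftm M c))"
  unfolding det_def
  apply (rule pf_sum, simp)
  apply (rule pf_mult[OF pf_const])
  apply (rule pf_prod, simp)
  apply (simp add: shiftm_def)
  subgoal for p i
  proof (cases "i = p i")
    case True
    have "pf (\<lambda>c. cmat M $ i $ p i + (-1) * c)"
      by (intro pf_add pf_mult pf_const pf_id)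
    then show ?thesis using True by simp
  next
    case False
    then show ?thesis by (simp add: pf_const)
  qed
  done

lemma shiftm_mult: "shiftm M c *v u = cmat M *v u - c *s u"
proof -
  have "(\<Sum>j\<in>UNIV. (cmat M $ i $ j - (if i = j then c else 0)) * u $ j) =
         (\<Sum>j\<in>UNIV. cmat M $ i $ j * u $ j) - c * u $ i" for i
  proof -
    have "(\<Sum>j\<in>UNIV. (cmat M $ i $ j - (if i = j then c else 0)) * u $ j) =
         (\<Sum>j\<in>UNIV. cmat M $ i $ j * u $ j) - (\<Sum>j\<in>UNIV. (if i = j then c * u $ j else 0))"
      by (simp add: left_diff_distrib sum_subtractf if_distrib[of "\<lambda>x. x * _"] cong: if_cong)
    then show ?thesis by simp
  qed
  then show ?thesis by (simp add: shiftm_def matrix_vector_mult_def vec_eq_iff)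
qed

lemma det_shiftm_iff: "det (shiftm M c) \<noteq> 0 \<longleftrightarrow> c \<notin> eigenvalues M"
proof -
  have lin: "Vector_Spaces.linear (*s) (*s) ((*v) (shiftm M c))"
    by (rule matrix_vector_mul_linear_gen)
  have "det (shiftm M c) \<noteq> 0 \<longleftrightarrow> inj ((*v) (shiftm M c))"
    using det_nz_iff_inj_gen[OF lin] by (simp add: matrix_of_matrix_vector_mul)
  also have "\<dots> \<longleftrightarrow> (\<forall>u. shiftm M c *v u = 0 \<longrightarrow> u = 0)"
  proof
    assume "inj ((*v) (shiftm M c))" then show "\<forall>u. shiftm M c *v u = 0 \<longrightarrow> u = 0"
      by (metis injD matrix_vector_mult_0_right)
  next
    assume h: "\<forall>u. shiftm M c *v u = 0 \<longrightarrow> u = 0"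
    show "inj ((*v) (shiftm M c))"
    proof (rule injI)
      fix a b assume "shiftm M c *v a = shiftm M c *v b"
      then have "shiftm M c *v (a - b) = 0" by (simp add: matrix_vector_mult_diff_distrib)
      then show "a = b" using h by auto
    qed
  qed
  also have "\<dots> \<longleftrightarrow> c \<notin> eigenvalues M"
    by (auto simp: eigenvalues_def shiftm_mult)
  finally show ?thesis .
qed

lemma eigen_bounded: "\<exists>K. \<forall>c \<in> eigenvalues M. cmod c \<le> K"
proof -
  obtain K where K: "\<And>u. norm (cmat M *v u) \<le> norm u * K"
    using bounded_linear.bounded[OF matrix_vector_mul_bounded_linear] by blast
  have "cmod c \<le> K" if ce: "c \<in> eigenvalues M" for c
  proof -
    obtain u where u: "u \<noteq> 0" "cmat M *v u = c *s u" using ce unfolding eigenvalues_def by blast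
    have "norm (c *s u) = cmod c * norm u"
    proof -
      have "norm (c *s u) = L2_set (\<lambda>i. cmod c * norm (u$i)) UNIV"
        unfolding norm_vec_def by (simp add: norm_mult)
      also have "\<dots> = cmod c * norm u"
        unfolding norm_vec_def by (rule L2_set_right_distrib[symmetric]) simp
      finally show ?thesis .
    qed
    then have "cmod c * norm u \<le> norm u * K" using K[of u] u(2) by metis
    moreover have "norm u > 0" using u(1) by (rule zero_less_norm_iff[THEN iffD2])
    ultimately show ?thesis by (metis mult.commute mult_le_cancel_left_pos)
  qed
  then show ?thesis by blast
qed

lemma eigen_finite: "finite (eigenvalues M)"
proof -
  obtain K where K: "\<forall>c \<in> eigenvalues M. cmod c \<le> K" using eigen_bounded by blast
  define c0 where "c0 = complex_of_real (\<bar>K\<bar> + 1)"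
  have "c0 \<notin> eigenvalues M" proof assume "c0 \<in> eigenvalues M" then have "cmod c0 \<le> K" using K by blast then show False by (simp add: c0_def) qed
  then have nz: "det (shiftm M c0) \<noteq> 0" using det_shiftm_iff by blast
  obtain p where p: "\<And>c. det (shiftm M c) = poly p c" using pf_det[of M] unfolding pf_def by blast
  have "p \<noteq> 0" using nz p by auto
  then have "finite {c. poly p c = 0}" by (rule poly_roots_finite)
  moreover have "eigenvalues M \<subseteq> {c. poly p c = 0}"
  proof
    fix c assume "c \<in> eigenvalues M"
    then have "det (shiftm M c) = 0" using det_shiftm_iff by blast
    then show "c \<in> {c. poly p c = 0}" using p by simp
  qed
  ultimately show ?thesis by (rule finite_subset[rotated])
qed

lemma le_spec_rad: "c \<in> eigenvalues M \<Longrightarrow> cmod c \<le> spec_rad M"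
  unfolding spec_rad_def using eigen_finite by (intro Max_ge) auto




lemma sol_decay:
  fixes f :: "real^'n \<Rightarrow> real^'n"
  assumes kpos: "\<kappa> > 0" and kf: "\<forall>y. y \<bullet> f y \<le> -\<kappa> * (y \<bullet> y)"
    and sol: "is_solution f \<phi>" and t: "0 \<le> t"
  shows "exp (2*\<kappa>*t) * (\<phi> t \<bullet> \<phi> t) \<le> \<phi> 0 \<bullet> \<phi> 0"
proof -
  define W where "W x = exp (2*\<kappa>*x) * (\<phi> x \<bullet> \<phi> x)" for x
  have der: "(W has_real_derivative exp (2*\<kappa>*x) * (2*\<kappa>*(\<phi> x \<bullet> \<phi> x) + 2*(\<phi> x \<bullet> f (\<phi> x))))
      (at x within {0..})" if "x \<ge> 0" for x
  proof -
    have d: "(\<phi> has_derivative (\<lambda>h. h *\<^sub>R f (\<phi> x))) (at x within {0..})"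
      using sol that unfolding is_solution_def has_vector_derivative_def by blast
    have "((\<lambda>x. \<phi> x \<bullet> \<phi> x) has_derivative (\<lambda>h. \<phi> x \<bullet> (h *\<^sub>R f (\<phi> x)) + (h *\<^sub>R f (\<phi> x)) \<bullet> \<phi> x))
        (at x within {0..})"
      by (rule has_derivative_inner[OF d d])
    then have i: "((\<lambda>x. \<phi> x \<bullet> \<phi> x) has_real_derivative 2*(\<phi> x \<bullet> f (\<phi> x))) (at x within {0..})"
      unfolding has_field_derivative_def
      by (rule has_derivative_eq_rhs) (simp add: fun_eq_iff algebra_simps inner_commute)
    have e: "((\<lambda>x. exp (2*\<kappa>*x)) has_real_derivative exp (2*\<kappa>*x) * (2*\<kappa>)) (at x within {0..})"
      by (auto intro!: derivative_eq_intros)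
    show ?thesis unfolding W_def
      using DERIV_mult[OF e i] by (simp add: algebra_simps)
  qed
  have "W t \<le> W 0"
  proof (rule DERIV_nonpos_imp_decreasing_open[OF t])
    fix x assume x: "0 < x" "x < t"
    have "x \<in> interior {0..}" using x interior_Ici[of "-1" "0::real"] by auto
    then have "at x within {0..} = at x" by (rule at_within_interior)
    then have "(W has_real_derivative exp (2*\<kappa>*x) * (2*\<kappa>*(\<phi> x \<bullet> \<phi> x) + 2*(\<phi> x \<bullet> f (\<phi> x)))) (at x)"
      using der[of x] x by simp
    moreover have "exp (2*\<kappa>*x) * (2*\<kappa>*(\<phi> x \<bullet> \<phi> x) + 2*(\<phi> x \<bullet> f (\<phi> x))) \<le> 0"
      using kf[rule_format, of "\<phi> x"] by (intro mult_nonneg_nonpos) auto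
    ultimately show "\<exists>y. (W has_real_derivative y) (at x) \<and> y \<le> 0" by blast
  next
    show "continuous_on {0..t} W"
      unfolding continuous_on_eq_continuous_within
    proof
      fix x assume "x \<in> {0..t}"
      then have "continuous (at x within {0..}) W" using der[of x] DERIV_continuous by auto
      then show "continuous (at x within {0..t}) W" by (rule continuous_within_subset) auto
    qed
  qed
  then show ?thesis by (simp add: W_def)
qed

lemma stab:
  fixes f :: "real^'n \<Rightarrow> real^'n"
  assumes kpos: "\<kappa> > 0" and kf: "\<forall>y. y \<bullet> f y \<le> -\<kappa> * (y \<bullet> y)"
  shows "loc_asym_stable f 0"
proof -
  have bnd: "norm (\<phi> t) \<le> exp (-\<kappa>*t) * norm (\<phi> 0)" if "is_solution f \<phi>" "0 \<le> t" for \<phi> t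
  proof -
    have "exp (2*\<kappa>*t) * (norm (\<phi> t))^2 \<le> (norm (\<phi> 0))^2"
      using sol_decay[OF kpos kf that] by (simp add: power2_norm_eq_inner)
    then have "(norm (\<phi> t))^2 \<le> (exp (-\<kappa>*t) * norm (\<phi> 0))^2"
    proof -
      assume h: "exp (2*\<kappa>*t) * (norm (\<phi> t))^2 \<le> (norm (\<phi> 0))^2"
      have "(exp (-\<kappa>*t))^2 = exp (-(2*\<kappa>*t))"
        by (simp add: power2_eq_square exp_add[symmetric])
      moreover have "exp (-(2*\<kappa>*t)) * exp (2*\<kappa>*t) = 1" by (simp add: exp_minus field_simps)
      ultimately have "(exp (-\<kappa>*t) * norm (\<phi> 0))^2 = exp (-(2*\<kappa>*t)) * (norm (\<phi> 0))^2"
        by (simp add: power_mult_distrib)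
      also have "\<dots> \<ge> exp (-(2*\<kappa>*t)) * (exp (2*\<kappa>*t) * (norm (\<phi> t))^2)"
        using h by (intro mult_left_mono) auto
      also have "exp (-(2*\<kappa>*t)) * (exp (2*\<kappa>*t) * (norm (\<phi> t))^2) = (norm (\<phi> t))^2"
        by (simp add: exp_minus field_simps)
      finally show ?thesis .
    qed
    then show ?thesis by (rule power2_le_imp_le) simp
  qed
  have b2: "norm (\<phi> t) \<le> norm (\<phi> 0)" if "is_solution f \<phi>" "0 \<le> t" for \<phi> t
  proof -
    have "exp (-\<kappa>*t) \<le> 1" using kpos that(2) by simp
    then have "exp (-\<kappa>*t) * norm (\<phi> 0) \<le> norm (\<phi> 0)"
      by (simp add: mult_left_le_one_le)
    then show ?thesis using bnd[OF that] by linarith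
  qed
  show ?thesis unfolding loc_asym_stable_def
  proof (intro conjI allI impI)
    fix \<epsilon> :: real assume "\<epsilon> > 0"
    show "\<exists>\<delta>>0. \<forall>\<phi>. is_solution f \<phi> \<and> dist (\<phi> 0) 0 < \<delta> \<longrightarrow> (\<forall>t\<ge>0. dist (\<phi> t) 0 < \<epsilon>)"
      using \<open>\<epsilon> > 0\<close> b2 by (intro exI[of _ \<epsilon>]) (auto simp: dist_norm intro: le_less_trans)
  next
    show "\<exists>\<delta>>0. \<forall>\<phi>. is_solution f \<phi> \<and> dist (\<phi> 0) 0 < \<delta> \<longrightarrow> (\<phi> \<longlongrightarrow> 0) at_top"
    proof (intro exI[of _ 1] conjI allI impI)
      fix \<phi> :: "real \<Rightarrow> real^'n" assume h: "is_solution f \<phi> \<and> dist (\<phi> 0) 0 < 1"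
      have lim: "((\<lambda>t. exp (-\<kappa>*t) * norm (\<phi> 0)) \<longlongrightarrow> 0) at_top"
      proof -
        have "filterlim (\<lambda>t. -\<kappa>*t) at_bot at_top"
          unfolding filterlim_uminus_at_bot
          using filterlim_tendsto_pos_mult_at_top[OF tendsto_const kpos filterlim_ident] by simp
        then have "((\<lambda>t. exp (-\<kappa>*t)) \<longlongrightarrow> 0) at_top"
          by (rule filterlim_compose[OF exp_at_bot])
        then show ?thesis by (rule tendsto_mult_left_zero)
      qed
      show "(\<phi> \<longlongrightarrow> 0) at_top"
      proof (rule Lim_null_comparison[OF _ lim])
        show "\<forall>\<^sub>F t in at_top. norm (\<phi> t) \<le> exp (-\<kappa>*t) * norm (\<phi> 0)"
          using eventually_ge_at_top[of "0::real"]
        proof (rule eventually_mono)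
          fix t :: real assume "0 \<le> t" then show "norm (\<phi> t) \<le> exp (-\<kappa>*t) * norm (\<phi> 0)"
            using h bnd by blast
        qed
      qed
    qed simp
  qed
qed




lemma sym_inner:
  fixes B :: "real^'n^'n"
  assumes "transpose B = B"
  shows "a \<bullet> (B *v b) = (B *v a) \<bullet> b"
proof -
  have "a \<bullet> (B *v b) = (a v* B) \<bullet> b" by (simp add: dot_lmul_matrix)
  also have "a v* B = B *v a"
    by (metis assms transpose_matrix_vector)
  finally show ?thesis .
qed

lemma real_eig:
  fixes B :: "real^'n^'n"
  assumes "y \<noteq> 0" "B *v y = M *\<^sub>R y"
  shows "complex_of_real M \<in> eigenvalues B"
proof -
  define u where "u = (\<chi> i. complex_of_real (y $ i))"
  have "u \<noteq> 0" using assms(1) by (auto simp: u_def vec_eq_iff)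
  moreover have "cmat B *v u = complex_of_real M *s u"
  proof -
    have "(B *v y) $ i = M * y $ i" for i using assms(2) by simp
    then have "(\<Sum>j\<in>UNIV. B $ i $ j * y $ j) = M * y $ i" for i
      by (simp add: matrix_vector_mult_def)
    then have "(\<Sum>j\<in>UNIV. complex_of_real (B $ i $ j) * complex_of_real (y $ j)) = complex_of_real M * complex_of_real (y $ i)" for i
      by (metis (no_types, lifting) of_real_mult of_real_sum sum.cong)
    then show ?thesis by (simp add: cmat_def u_def matrix_vector_mult_def vec_eq_iff)
  qed
  ultimately show ?thesis unfolding eigenvalues_def by blast
qed

lemma aux_quad:
  fixes qy t P Q M Y a :: real
  assumes "qy + 2*t*P + t^2*Q \<le> M*(1 + 2*t*Y + t^2*a)" "a = M*Y - P" "M = qy"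
  shows "0 \<le> 2*t*a + t^2*(M*a - Q)"
proof -
  have "M*(1 + 2*t*Y + t^2*a) - (qy + 2*t*P + t^2*Q) = 2*t*(M*Y-P) + t^2*(M*a - Q)"
    using assms(3) by (simp add: algebra_simps)
  then show ?thesis using assms(1,2) by simp
qed

lemma sym_max_eig:
  fixes B :: "real^'n^'n"
  assumes sym: "transpose B = B"
  shows "\<exists>M. complex_of_real M \<in> eigenvalues B \<and> (\<forall>z. z \<bullet> (B *v z) \<le> M * (z \<bullet> z))"
proof -
  define q where "q z = z \<bullet> (B *v z)" for z
  have "continuous_on (sphere 0 1) q" unfolding q_def
    by (intro continuous_intros continuous_on_compose2[of UNIV "(*v) B"]) 
       (auto intro: linear_continuous_on matrix_vector_mul_linear)
  moreover have "sphere (0::real^'n) 1 \<noteq> {}" by simp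
  ultimately obtain y where y: "y \<in> sphere 0 1" and ymax: "\<forall>z\<in>sphere 0 1. q z \<le> q y"
    using continuous_attains_sup[OF compact_sphere] by blast
  define M where "M = q y"
  have yy: "y \<bullet> y = 1" using y by (simp add: dot_square_norm)
  have bound: "q z \<le> M * (z \<bullet> z)" for z
  proof (cases "z = 0")
    case True then show ?thesis by (simp add: q_def)
  next
    case False
    define w where "w = (1 / norm z) *\<^sub>R z"
    have "w \<in> sphere 0 1" using False by (simp add: w_def)
    then have "q w \<le> M" using ymax M_def by blast
    moreover have "q z = (norm z)^2 * q w" using False
      by (simp add: q_def w_def matrix_vector_mult_scaleR power2_eq_square)
    moreover have "z \<bullet> z = (norm z)^2" by (simp add: power2_norm_eq_inner)
    ultimately show ?thesis by (simp add: mult.commute mult_right_mono)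
  qed
  define d where "d = M *\<^sub>R y - B *v y"
  define a where "a = d \<bullet> d"
  define b where "b = M * a - q d"
  have b0: "b \<ge> 0" using bound[of d] by (simp add: b_def a_def)
  have key: "0 \<le> 2*t*a + t^2 * b" for t
  proof -
    have "q (y + t *\<^sub>R d) \<le> M * ((y + t *\<^sub>R d) \<bullet> (y + t *\<^sub>R d))" by (rule bound)
    moreover have e1: "q (y + t *\<^sub>R d) = q y + 2*t*(d \<bullet> (B *v y)) + t^2 * q d"
      using sym_inner[OF sym, of y d]
      by (simp add: q_def matrix_vector_right_distrib matrix_vector_mult_scaleR inner_add_left inner_add_right
          inner_commute power2_eq_square algebra_simps)
    moreover have e2: "(y + t *\<^sub>R d) \<bullet> (y + t *\<^sub>R d) = 1 + 2*t*(y \<bullet> d) + t^2 * a"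
      using yy by (simp add: a_def inner_add_left inner_add_right inner_commute power2_eq_square algebra_simps)
    moreover have e3: "a = M * (y \<bullet> d) - d \<bullet> (B *v y)"
      by (simp add: a_def d_def inner_diff_left inner_diff_right inner_commute algebra_simps)
    ultimately have "q y + 2*t*(d \<bullet> (B *v y)) + t^2 * q d \<le> M * (1 + 2*t*(y \<bullet> d) + t^2 * a)"
      by simp
    from aux_quad[OF this e3 M_def] show ?thesis unfolding b_def .
  qed
  have "a = 0"
  proof -
    define t where "t = - a / (b + 1)"
    have "0 \<le> (b+1)^2 * (2*t*a + t^2 * b)" using key[of t] by simp
    also have "(b+1)^2 * (2*t*a + t^2 * b) = 2*a*(t*(b+1))*(b+1) + (t*(b+1))^2*b"
      by (simp add: algebra_simps power2_eq_square)
    also have "t*(b+1) = -a" using b0 by (simp add: t_def)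
    also have "2*a*(-a)*(b+1) + (-a)^2*b = - (a^2 * (b + 2))"
      by (simp add: algebra_simps power2_eq_square)
    finally have "a^2 * (b+2) \<le> 0" by simp
    then have "a^2 \<le> 0" using b0 by (simp add: mult_le_0_iff)
    then show ?thesis by simp
  qed
  then have "B *v y = M *\<^sub>R y" by (simp add: a_def d_def)
  moreover have "y \<noteq> 0" using y by auto
  ultimately have "complex_of_real M \<in> eigenvalues B" using real_eig by blast
  then show ?thesis using bound unfolding q_def by blast
qed

lemma polar:
  fixes B :: "real^'n^'n"
  assumes sym: "transpose B = B"
  shows "4*(a \<bullet> (B *v b)) = (a+b) \<bullet> (B *v (a+b)) - (a-b) \<bullet> (B *v (a-b))"
proof -
  have "b \<bullet> (B *v a) = a \<bullet> (B *v b)" using sym_inner[OF sym, of b a] by (simp add: inner_commute)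
  then show ?thesis
    by (simp add: matrix_vector_right_distrib matrix_vector_mult_diff_distrib inner_add_left inner_add_right
        inner_diff_left inner_diff_right)
qed

lemma eigen_neg:
  assumes "c \<in> eigenvalues (-B)"
  shows "-c \<in> eigenvalues B"
proof -
  obtain u where u: "u \<noteq> 0" "cmat (-B) *v u = c *s u" using assms unfolding eigenvalues_def by blast
  have "cmat (-B) = - cmat B" by (simp add: cmat_def vec_eq_iff)
  then have "cmat B *v u = (-c) *s u" using u(2)
    by (simp add: vec_eq_iff matrix_vector_mult_def sum_negf) (metis minus_equation_iff)
  then show ?thesis using u(1) unfolding eigenvalues_def by blast
qed

lemma sym_norm:
  fixes B :: "real^'n^'n"
  assumes sym: "transpose B = B"
  shows "norm (B *v y) \<le> spec_rad B * norm y"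
proof -
  obtain M1 where M1: "complex_of_real M1 \<in> eigenvalues B" "\<forall>z. z \<bullet> (B *v z) \<le> M1 * (z \<bullet> z)"
    using sym_max_eig[OF sym] by blast
  have symn: "transpose (-B) = -B" using sym by (simp add: transpose_def vec_eq_iff)
  obtain M2 where M2: "complex_of_real M2 \<in> eigenvalues (-B)" "\<forall>z. z \<bullet> ((-B) *v z) \<le> M2 * (z \<bullet> z)"
    using sym_max_eig[OF symn] by blast
  define \<mu> where "\<mu> = max \<bar>M1\<bar> \<bar>M2\<bar>"
  have "\<bar>M1\<bar> \<le> spec_rad B" using le_spec_rad[OF M1(1)] by simp
  moreover have "\<bar>M2\<bar> \<le> spec_rad B" using le_spec_rad[OF eigen_neg[OF M2(1)]] by simp
  ultimately have mu: "\<mu> \<le> spec_rad B" by (simp add: \<mu>_def)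
  have negq: "z \<bullet> ((-B) *v z) = - (z \<bullet> (B *v z))" for z
    by (simp add: matrix_vector_mult_def inner_vec_def sum_negf sum_distrib_left)
  have qb: "\<bar>z \<bullet> (B *v z)\<bar> \<le> \<mu> * (z \<bullet> z)" for z
  proof -
    have zz: "z \<bullet> z \<ge> 0" by simp
    have "z \<bullet> (B *v z) \<le> \<bar>M1\<bar> * (z \<bullet> z)"
      using M1(2) zz by (meson abs_ge_self mult_right_mono order_trans)
    moreover have "- (z \<bullet> (B *v z)) \<le> \<bar>M2\<bar> * (z \<bullet> z)"
      using M2(2) zz negq[of z] by (metis abs_ge_self mult_right_mono order_trans)
    moreover have "\<bar>M1\<bar> * (z \<bullet> z) \<le> \<mu> * (z \<bullet> z)" "\<bar>M2\<bar> * (z \<bullet> z) \<le> \<mu> * (z \<bullet> z)"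
      using zz by (auto simp: \<mu>_def intro: mult_right_mono)
    ultimately show ?thesis by linarith
  qed
  have mu0: "\<mu> \<ge> 0" by (simp add: \<mu>_def)
  define w where "w = B *v y"
  have "norm w \<le> \<mu> * norm y"
  proof (cases "y = 0 \<or> w = 0")
    case True then show ?thesis using mu0 by (auto simp: w_def)
  next
    case False
    define a where "a = norm y *\<^sub>R w"
    define b where "b = norm w *\<^sub>R y"
    have ab: "a \<bullet> (B *v b) = norm y * norm w * (norm w)^2"
      by (simp add: a_def b_def w_def matrix_vector_mult_scaleR power2_norm_eq_inner)
    have "4*(a \<bullet> (B *v b)) \<le> \<mu> * ((a+b) \<bullet> (a+b)) + \<mu> * ((a-b) \<bullet> (a-b))"
      using polar[OF sym, of a b] qb[of "a+b"] qb[of "a-b"] by (simp add: abs_le_iff)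
    also have "\<dots> = 2 * \<mu> * (a \<bullet> a + b \<bullet> b)"
      by (simp add: inner_add_left inner_add_right inner_diff_left inner_diff_right inner_commute algebra_simps)
    also have "a \<bullet> a + b \<bullet> b = 2 * (norm y)^2 * (norm w)^2"
      by (simp add: a_def b_def power2_norm_eq_inner[symmetric] power_mult_distrib)
    finally have "4 * (norm y * norm w * (norm w)^2) \<le> 4 * (\<mu> * norm y * norm w * (norm y * norm w))"
      unfolding ab by (simp add: algebra_simps power2_eq_square)
    then have "norm w * (norm y * norm w * norm w) \<le> (\<mu> * norm y) * (norm y * norm w * norm w)"
      by (simp add: algebra_simps power2_eq_square)
    moreover have "norm y * norm w * norm w > 0" using False by simp
    ultimately show ?thesis by (simp add: mult_le_cancel_right_pos)
  qed
  also have "\<dots> \<le> spec_rad B * norm y" using mu by (simp add: mult_right_mono)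
  finally show ?thesis by (simp add: w_def)
qed




lemma diagm_mult: "diagm d *v y = (\<chi> i. d $ i * y $ i)"
  by (simp add: diagm_def matrix_vector_mult_def vec_eq_iff if_distrib[of "\<lambda>x. x * _"] cong: if_cong)

lemma diag_eig: "complex_of_real (d $ k) \<in> eigenvalues (diagm d)"
proof -
  have "axis k (1::real) \<noteq> 0" by (simp add: axis_eq_0_iff)
  moreover have "diagm d *v axis k 1 = d $ k *\<^sub>R axis k 1"
    by (simp add: diagm_mult vec_eq_iff axis_def)
  ultimately show ?thesis by (rule real_eig)
qed

lemma diag_inv:
  assumes "\<forall>i. 0 < \<gamma> $ i"
  shows "matrix_inv (diagm \<gamma>) = diagm (\<chi> i. 1 / \<gamma> $ i)"
proof -
  let ?A = "diagm \<gamma>" and ?C = "diagm (\<chi> i. 1 / \<gamma> $ i)"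
  have dd: "diagm a ** diagm b = diagm (\<chi> i. a $ i * b $ i)" for a b :: "real^'n"
    by (simp add: diagm_def matrix_matrix_mult_def vec_eq_iff if_distrib[of "\<lambda>x. x * _"] cong: if_cong)
  have m1: "diagm ((\<chi> i. 1) :: real^'n) = mat 1" by (simp add: diagm_def mat_def vec_eq_iff)
  have c1: "?A ** ?C = mat 1" "?C ** ?A = mat 1"
    using assms by (simp_all add: dd m1[symmetric] vec_eq_iff) (simp_all add: diagm_def less_imp_neq[symmetric])
  have ex: "\<exists>A'. ?A ** A' = mat 1 \<and> A' ** ?A = mat 1" using c1 by blast
  obtain A' where A': "?A ** A' = mat 1 \<and> A' ** ?A = mat 1" "matrix_inv ?A = A'"
    unfolding matrix_inv_def using someI_ex[OF ex] by blast
  have "A' = A' ** (?A ** ?C)" using c1 by (simp add: matrix_mul_rid)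
  also have "\<dots> = (A' ** ?A) ** ?C" by (simp add: matrix_mul_assoc)
  also have "\<dots> = ?C" using A' by (simp add: matrix_mul_lid)
  finally show ?thesis using A' by simp
qed

lemma irr_nonzero:
  fixes B :: "real^'n^'n"
  assumes "irreducible_mat B"
  shows "\<exists>i j. B $ i $ j \<noteq> 0"
proof -
  obtain i :: 'n where True by simp
  have "(i, i) \<in> {(a, b). B $ a $ b \<noteq> 0}\<^sup>+" using assms unfolding irreducible_mat_def by blast
  then show ?thesis by (induction rule: trancl.induct) auto
qed

lemma specB_pos:
  fixes B :: "real^'n^'n"
  assumes "transpose B = B" "irreducible_mat B"
  shows "spec_rad B > 0"
proof -
  obtain i j where ij: "B $ i $ j \<noteq> 0" using irr_nonzero[OF assms(2)] by blast
  have "(B *v axis j 1) $ i = B $ i $ j"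
    by (simp add: matrix_vector_mult_def axis_def if_distrib[of "\<lambda>x. _ * x"] cong: if_cong)
  then have "B *v axis j 1 \<noteq> 0" using ij by auto
  then have "0 < norm (B *v axis j 1)" by simp
  also have "\<dots> \<le> spec_rad B * norm (axis j (1::real))" by (rule sym_norm[OF assms(1)])
  finally show ?thesis by (simp add: zero_less_mult_iff)
qed




theorem theorem1:
  fixes A B Hmin dH :: "real^'n^'n" and \<omega> \<delta> \<gamma> :: "real^'n"
  assumes "nonneg_mat A" and "nonneg_mat B" and "nonneg_mat Hmin" and "nonneg_mat dH"
    and "\<forall>i. 0 \<le> \<omega> $ i" and "\<forall>i. 0 \<le> \<delta> $ i" and "\<forall>i. 0 < \<gamma> $ i"
    and "irreducible_mat A" and "irreducible_mat B" and "irreducible_mat Hmin"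
    and "transpose B = B"
  shows "spec_rad (matrix_inv (diagm \<gamma>)) * spec_rad B \<noteq> 0
    \<and> (\<forall>m op s x r v T. sirsvo_traj A B Hmin dH \<omega> \<delta> \<gamma> m op s x r v \<and> 0 \<le> T
         \<and> (\<forall>t\<ge>T. \<forall>i. v t $ i > 1 - 1 / (spec_rad (matrix_inv (diagm \<gamma>)) * spec_rad B))
         \<longrightarrow> (\<forall>t\<ge>T. loc_asym_stable (\<lambda>y. diagm (s t) ** B *v y - diagm \<gamma> *v y) 0))"
proof -
  define \<rho>G where "\<rho>G = spec_rad (matrix_inv (diagm \<gamma>))"
  define \<rho>B where "\<rho>B = spec_rad B"
  have gpos: "\<forall>i. 0 < \<gamma> $ i" by fact
  have symB: "transpose B = B" by fact
  have rB: "\<rho>B > 0" unfolding \<rho>B_def using specB_pos symB assms(9) by blast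
  have rG: "\<rho>G \<ge> 1 / \<gamma> $ k" for k
  proof -
    have "complex_of_real ((\<chi> i. 1 / \<gamma> $ i) $ k) \<in> eigenvalues (matrix_inv (diagm \<gamma>))"
      unfolding diag_inv[OF gpos] by (rule diag_eig)
    from le_spec_rad[OF this] show ?thesis using gpos[rule_format, of k] by (simp add: \<rho>G_def norm_divide)
  qed
  have rGpos: "\<rho>G > 0" using rG[of undefined] gpos
    by (metis less_le_trans zero_less_divide_1_iff)
  define \<theta> where "\<theta> = 1 / (\<rho>G * \<rho>B)"
  have th0: "\<theta> > 0" using rGpos rB by (simp add: \<theta>_def)
  have thg: "\<theta> * \<rho>B \<le> \<gamma> $ k" for k
  proof -
    have "\<theta> * \<rho>B = 1 / \<rho>G" using rB by (simp add: \<theta>_def)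
    also have "\<dots> \<le> \<gamma> $ k"
    proof -
      have g: "\<gamma> $ k > 0" using gpos by blast
      have "1 \<le> \<rho>G * \<gamma> $ k" using rG[of k] g by (simp add: divide_le_eq)
      then show ?thesis using rGpos by (simp add: divide_le_eq mult.commute)
    qed
    finally show ?thesis .
  qed
  have part2: "loc_asym_stable (\<lambda>y. diagm (s t) ** B *v y - diagm \<gamma> *v y) 0"
    if traj: "sirsvo_traj A B Hmin dH \<omega> \<delta> \<gamma> m op s x r v" and T: "0 \<le> T"
      and vc: "\<forall>t\<ge>T. \<forall>i. v t $ i > 1 - \<theta>" and t: "t \<ge> T" for m op s x r v T t
  proof -
    have box: "\<forall>i. 0 \<le> s t $ i \<and> 0 \<le> x t $ i \<and> 0 \<le> r t $ i \<and> s t $ i + x t $ i + r t $ i + v t $ i = 1"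
      using traj t T unfolding sirsvo_traj_def by auto
    have sth: "s t $ i < \<theta>" for i
    proof -
      have "v t $ i > 1 - \<theta>" using vc t by blast
      moreover have "0 \<le> x t $ i" "0 \<le> r t $ i" "s t $ i + x t $ i + r t $ i + v t $ i = 1"
        using box by auto
      ultimately show ?thesis by linarith
    qed
    define \<sigma> where "\<sigma> = Max (range (\<lambda>i. s t $ i))"
    have si: "s t $ i \<le> \<sigma>" for i unfolding \<sigma>_def by (rule Max_ge) auto
    have s0: "0 \<le> \<sigma>" using si[of undefined] box by (meson order_trans)
    have sigth: "\<sigma> < \<theta>" unfolding \<sigma>_def using sth by (subst Max_less_iff) auto
    define \<kappa> where "\<kappa> = (\<theta> - \<sigma>) * \<rho>B"
    have kpos: "\<kappa> > 0" using sigth rB by (simp add: \<kappa>_def)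
    show ?thesis
    proof (rule stab[OF kpos], rule allI)
      fix y :: "real^'n"
      let ?S = "diagm (s t)"
      have "y \<bullet> (?S ** B *v y) = (?S *v y) \<bullet> (B *v y)"
        by (simp add: matrix_vector_mul_assoc[symmetric] diagm_mult inner_vec_def algebra_simps)
      also have "\<dots> \<le> norm (?S *v y) * norm (B *v y)" by (rule norm_cauchy_schwarz)
      also have "\<dots> \<le> (\<sigma> * norm y) * (\<rho>B * norm y)"
      proof (rule mult_mono)
        have "(?S *v y) \<bullet> (?S *v y) \<le> (\<sigma> * norm y)^2"
        proof -
          have "(?S *v y) \<bullet> (?S *v y) = (\<Sum>i\<in>UNIV. (s t $ i)^2 * (y $ i)^2)"
            by (simp add: diagm_mult inner_vec_def power2_eq_square algebra_simps)
          also have "\<dots> \<le> (\<Sum>i\<in>UNIV. \<sigma>^2 * (y $ i)^2)"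
            using box si by (intro sum_mono mult_right_mono power_mono) auto
          also have "\<dots> = \<sigma>^2 * (y \<bullet> y)"
            by (simp add: inner_vec_def sum_distrib_left power2_eq_square)
          also have "\<dots> = (\<sigma> * norm y)^2"
            by (simp add: power_mult_distrib power2_norm_eq_inner)
          finally show ?thesis .
        qed
        then have "(norm (?S *v y))^2 \<le> (\<sigma> * norm y)^2" by (simp only: power2_norm_eq_inner)
        then show "norm (?S *v y) \<le> \<sigma> * norm y"
          by (rule power2_le_imp_le) (use s0 in simp)
        show "norm (B *v y) \<le> \<rho>B * norm y" unfolding \<rho>B_def by (rule sym_norm[OF symB])
      qed (use s0 rB in auto)
      also have "\<dots> = \<sigma> * \<rho>B * (y \<bullet> y)" by (simp add: power2_norm_eq_inner[symmetric] power2_eq_square)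
      finally have p1: "y \<bullet> (?S ** B *v y) \<le> \<sigma> * \<rho>B * (y \<bullet> y)" .
      have "\<theta> * \<rho>B * (y \<bullet> y) = (\<Sum>i\<in>UNIV. \<theta> * \<rho>B * (y $ i * y $ i))"
        by (simp add: inner_vec_def sum_distrib_left)
      also have "\<dots> \<le> (\<Sum>i\<in>UNIV. \<gamma> $ i * (y $ i * y $ i))"
        using thg by (intro sum_mono mult_right_mono) auto
      also have "\<dots> = y \<bullet> (diagm \<gamma> *v y)"
        by (simp add: diagm_mult inner_vec_def algebra_simps)
      finally have p2: "\<theta> * \<rho>B * (y \<bullet> y) \<le> y \<bullet> (diagm \<gamma> *v y)" .
      show "y \<bullet> (?S ** B *v y - diagm \<gamma> *v y) \<le> - \<kappa> * (y \<bullet> y)"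
        using p1 p2 by (simp add: inner_diff_right \<kappa>_def algebra_simps)
    qed
  qed
  have c1: "\<rho>G * \<rho>B \<noteq> 0" using rGpos rB by simp
  have c2: "\<forall>m op s x r v T. sirsvo_traj A B Hmin dH \<omega> \<delta> \<gamma> m op s x r v \<and> 0 \<le> T
         \<and> (\<forall>t\<ge>T. \<forall>i. v t $ i > 1 - 1 / (\<rho>G * \<rho>B))
         \<longrightarrow> (\<forall>t\<ge>T. loc_asym_stable (\<lambda>y. diagm (s t) ** B *v y - diagm \<gamma> *v y) 0)"
    using part2 unfolding \<theta>_def by blast
  from c1 c2 show ?thesis unfolding \<rho>G_def \<rho>B_def by blast
qed


end
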